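(* Let $\mathbb A$ be an abelian category with enough projective objects. Let $(f_0,f_1):a\to b$ be a morphism in $\mathbb A^{[1]}_c$ and let $g:\mathrm{Ker}(a)\to\mathrm{Ker}(b)$ and $h:\mathrm{Coker}(a)\to\mathrm{Coker}(b)$ be the induced morphisms. Then $(f_0,f_1)$ is fully faithful in $\mathbb A^{[1]}_c$ if and only if $g$ is an isomorphism and $h$ is a monomorphism in $\mathbb A$.
   Context: Let $\mathbb A$ be an abelian category. The 2-category $\mathbb A^{[1]}$ has as objects the morphisms $a:A_1\to A_0$ of $\mathbb A$. For objects $a:A_1\to A_0$ and $b:B_1\to B_0$, a morphism $a\to b$ is a pair $(f_0,f_1)$ of morphisms $f_i:A_i\to B_i$ of $\mathbb A$ with $b f_1=f_0 a$; composition is componentwise. A 2-arrow $(f_0,f_1)\Rightarrow(g_0,g_1)$ between morphisms $a\to b$ is a morphism $\alpha:A_0\to B_1$ of $\mathbb A$ with $f_1-g_1=\alpha a$ and $f_0-g_0=b\alpha$; vertical composition is addition of such $\alpha$'s, and whiskering is given by $(h_0,h_1)\circ\alpha=h_1\alpha$ and $\alpha\circ(e_0,e_1)=\alpha e_0$. All 2-arrows are invertible, so each $\mathbf{Hom}(a,b)$ is a groupoid. $\mathbb A^{[1]}_c$ is the full 2-subcategory of $\mathbb A^{[1]}$ on the objects $a:A_1\to A_0$ with $A_0$ projective in $\mathbb A$. A morphism $(f_0,f_1):a\to b$ induces $g:\mathrm{Ker}(a)\to\mathrm{Ker}(b)$ (restriction of $f_1$) and $h:\mathrm{Coker}(a)\to\mathrm{Coker}(b)$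 (induced by $f_0$). A morphism $f:a\to b$ of $\mathbb A^{[1]}_c$ is fully faithful in $\mathbb A^{[1]}_c$ if for every object $x$ of $\mathbb A^{[1]}_c$ the functor $f\circ-:\mathbf{Hom}(x,a)\to\mathbf{Hom}(x,b)$ is full and faithful. *)

theory Defs
  imports Main
begin

text \<open>A category is given by a set of objects, hom-sets, composition
  (cmp C g f = g after f), identities, and the additive structure
  (addition, negation and zero morphisms) used in a preadditive category.\<close>

record ('o, 'm) cat_data =
  obj  :: "'o set"
  hom  :: "'o \<Rightarrow> 'o \<Rightarrow> 'm set"
  cmp  :: "'m \<Rightarrow> 'm \<Rightarrow> 'm"
  idm  :: "'o \<Rightarrow> 'm"
  plus :: "'m \<Rightarrow> 'm \<Rightarrow> 'm"
  neg  :: "'m \<Rightarrow> 'm"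
  zer  :: "'o \<Rightarrow> 'o \<Rightarrow> 'm"

definition minus :: "('o, 'm) cat_data \<Rightarrow> 'm \<Rightarrow> 'm \<Rightarrow> 'm" where
  "minus C f g = plus C f (neg C g)"

definition category :: "('o, 'm) cat_data \<Rightarrow> bool" where
  "category C \<longleftrightarrow>
     (\<forall>a b. hom C a b \<noteq> {} \<longrightarrow> a \<in> obj C \<and> b \<in> obj C) \<and>
     (\<forall>a b a' b' f. f \<in> hom C a b \<and> f \<in> hom C a' b' \<longrightarrow> a = a' \<and> b = b') \<and>
     (\<forall>a\<in>obj C. idm C a \<in> hom C a a) \<and>
     (\<forall>a b. \<forall>f\<in>hom C a b. cmp C (idm C b) f = f \<and> cmp C f (idm C a) = f) \<and>
     (\<forall>a b c. \<forall>f\<in>hom C a b. \<forall>g\<in>hom C b c. cmp C g f \<in> hom C a c) \<and>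
     (\<forall>a b c d. \<forall>f\<in>hom C a b. \<forall>g\<in>hom C b c. \<forall>h\<in>hom C c d.
        cmp C h (cmp C g f) = cmp C (cmp C h g) f)"

definition preadditive :: "('o, 'm) cat_data \<Rightarrow> bool" where
  "preadditive C \<longleftrightarrow> category C \<and>
     (\<forall>a\<in>obj C. \<forall>b\<in>obj C.
        zer C a b \<in> hom C a b \<and>
        (\<forall>f\<in>hom C a b. \<forall>g\<in>hom C a b. plus C f g \<in> hom C a b) \<and>
        (\<forall>f\<in>hom C a b. neg C f \<in> hom C a b) \<and>
        (\<forall>f\<in>hom C a b. \<forall>g\<in>hom C a b. \<forall>h\<in>hom C a b.
           plus C (plus C f g) h = plus C f (plus C g h)) \<and>
        (\<forall>f\<in>hom C a b. \<forall>g\<in>hom C a b. plus C f g = plus C g f) \<and>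
        (\<forall>f\<in>hom C a b. plus C f (zer C a b) = f) \<and>
        (\<forall>f\<in>hom C a b. plus C f (neg C f) = zer C a b)) \<and>
     (\<forall>a b c. \<forall>f\<in>hom C a b. \<forall>g\<in>hom C b c. \<forall>g'\<in>hom C b c.
        cmp C (plus C g g') f = plus C (cmp C g f) (cmp C g' f)) \<and>
     (\<forall>a b c. \<forall>f\<in>hom C a b. \<forall>f'\<in>hom C a b. \<forall>g\<in>hom C b c.
        cmp C g (plus C f f') = plus C (cmp C g f) (cmp C g f'))"

definition zero_object :: "('o, 'm) cat_data \<Rightarrow> 'o \<Rightarrow> bool" where
  "zero_object C z \<longleftrightarrow> z \<in> obj C \<and>
     (\<forall>x\<in>obj C. hom C z x = {zer C z x} \<and> hom C x z = {zer C x z})"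

definition has_biproducts :: "('o, 'm) cat_data \<Rightarrow> bool" where
  "has_biproducts C \<longleftrightarrow>
     (\<forall>A\<in>obj C. \<forall>B\<in>obj C. \<exists>S\<in>obj C.
        \<exists>i1\<in>hom C A S. \<exists>i2\<in>hom C B S. \<exists>p1\<in>hom C S A. \<exists>p2\<in>hom C S B.
          cmp C p1 i1 = idm C A \<and> cmp C p2 i2 = idm C B \<and>
          cmp C p1 i2 = zer C B A \<and> cmp C p2 i1 = zer C A B \<and>
          plus C (cmp C i1 p1) (cmp C i2 p2) = idm C S)"

definition is_kernel :: "('o, 'm) cat_data \<Rightarrow> 'o \<Rightarrow> 'o \<Rightarrow> 'm \<Rightarrow> 'o \<Rightarrow> 'm \<Rightarrow> bool" where
  "is_kernel C A B f K k \<longleftrightarrow> f \<in> hom C A B \<and> K \<in> obj C \<and> k \<in> hom C K A \<and>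
     cmp C f k = zer C K B \<and>
     (\<forall>X\<in>obj C. \<forall>u\<in>hom C X A. cmp C f u = zer C X B \<longrightarrow>
        (\<exists>!v. v \<in> hom C X K \<and> cmp C k v = u))"

definition is_cokernel :: "('o, 'm) cat_data \<Rightarrow> 'o \<Rightarrow> 'o \<Rightarrow> 'm \<Rightarrow> 'o \<Rightarrow> 'm \<Rightarrow> bool" where
  "is_cokernel C A B f Q q \<longleftrightarrow> f \<in> hom C A B \<and> Q \<in> obj C \<and> q \<in> hom C B Q \<and>
     cmp C q f = zer C A Q \<and>
     (\<forall>X\<in>obj C. \<forall>u\<in>hom C B X. cmp C u f = zer C A X \<longrightarrow>
        (\<exists>!v. v \<in> hom C Q X \<and> cmp C v q = u))"

definition is_mono :: "('o, 'm) cat_data \<Rightarrow> 'o \<Rightarrow> 'o \<Rightarrow> 'm \<Rightarrow> bool" where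
  "is_mono C A B f \<longleftrightarrow> f \<in> hom C A B \<and>
     (\<forall>X\<in>obj C. \<forall>u\<in>hom C X A. \<forall>v\<in>hom C X A. cmp C f u = cmp C f v \<longrightarrow> u = v)"

definition is_epi :: "('o, 'm) cat_data \<Rightarrow> 'o \<Rightarrow> 'o \<Rightarrow> 'm \<Rightarrow> bool" where
  "is_epi C A B f \<longleftrightarrow> f \<in> hom C A B \<and>
     (\<forall>X\<in>obj C. \<forall>u\<in>hom C B X. \<forall>v\<in>hom C B X. cmp C u f = cmp C v f \<longrightarrow> u = v)"

definition is_iso :: "('o, 'm) cat_data \<Rightarrow> 'o \<Rightarrow> 'o \<Rightarrow> 'm \<Rightarrow> bool" where
  "is_iso C A B f \<longleftrightarrow> f \<in> hom C A B \<and>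
     (\<exists>g\<in>hom C B A. cmp C g f = idm C A \<and> cmp C f g = idm C B)"

definition abelian :: "('o, 'm) cat_data \<Rightarrow> bool" where
  "abelian C \<longleftrightarrow> preadditive C \<and> (\<exists>z. zero_object C z) \<and> has_biproducts C \<and>
     (\<forall>A\<in>obj C. \<forall>B\<in>obj C. \<forall>f\<in>hom C A B.
        (\<exists>K k. is_kernel C A B f K k) \<and> (\<exists>Q q. is_cokernel C A B f Q q)) \<and>
     (\<forall>A B f. is_mono C A B f \<longrightarrow> (\<exists>Z g. is_kernel C B Z g A f)) \<and>
     (\<forall>A B f. is_epi C A B f \<longrightarrow> (\<exists>Z g. is_cokernel C Z A g B f))"

definition projective :: "('o, 'm) cat_data \<Rightarrow> 'o \<Rightarrow> bool" where
  "projective C P \<longleftrightarrow> P \<in> obj C \<and>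
     (\<forall>X Y e u. is_epi C X Y e \<longrightarrow> u \<in> hom C P Y \<longrightarrow> (\<exists>v\<in>hom C P X. cmp C e v = u))"

definition enough_projectives :: "('o, 'm) cat_data \<Rightarrow> bool" where
  "enough_projectives C \<longleftrightarrow>
     (\<forall>X\<in>obj C. \<exists>P e. projective C P \<and> is_epi C P X e)"

text \<open>An object of A^[1] is a triple (A1, A0, a) with a : A1 \<rightarrow> A0.
  A morphism is a pair (f0, f1).\<close>

definition arr_obj :: "('o, 'm) cat_data \<Rightarrow> 'o \<times> 'o \<times> 'm \<Rightarrow> bool" where
  "arr_obj C x = (case x of (X1, X0, xm) \<Rightarrow> xm \<in> hom C X1 X0)"

definition arr_obj_c :: "('o, 'm) cat_data \<Rightarrow> 'o \<times> 'o \<times> 'm \<Rightarrow> bool" where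
  "arr_obj_c C x = (arr_obj C x \<and> projective C (fst (snd x)))"

definition arr_mor :: "('o, 'm) cat_data \<Rightarrow> 'o \<times> 'o \<times> 'm \<Rightarrow> 'o \<times> 'o \<times> 'm \<Rightarrow> 'm \<times> 'm \<Rightarrow> bool" where
  "arr_mor C x y f = (case x of (A1, A0, a) \<Rightarrow> case y of (B1, B0, b) \<Rightarrow> case f of (f0, f1) \<Rightarrow>
     f0 \<in> hom C A0 B0 \<and> f1 \<in> hom C A1 B1 \<and> cmp C b f1 = cmp C f0 a)"

definition arr_comp :: "('o, 'm) cat_data \<Rightarrow> 'm \<times> 'm \<Rightarrow> 'm \<times> 'm \<Rightarrow> 'm \<times> 'm" where
  "arr_comp C g f = (cmp C (fst g) (fst f), cmp C (snd g) (snd f))"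

definition two_arrow :: "('o, 'm) cat_data \<Rightarrow> 'o \<times> 'o \<times> 'm \<Rightarrow> 'o \<times> 'o \<times> 'm \<Rightarrow>
    'm \<times> 'm \<Rightarrow> 'm \<times> 'm \<Rightarrow> 'm \<Rightarrow> bool" where
  "two_arrow C x y f g \<alpha> = (case x of (A1, A0, a) \<Rightarrow> case y of (B1, B0, b) \<Rightarrow>
     \<alpha> \<in> hom C A0 B1 \<and>
     minus C (snd f) (snd g) = cmp C \<alpha> a \<and>
     minus C (fst f) (fst g) = cmp C b \<alpha>)"

definition whisker_left :: "('o, 'm) cat_data \<Rightarrow> 'm \<times> 'm \<Rightarrow> 'm \<Rightarrow> 'm" where
  "whisker_left C h \<alpha> = cmp C (snd h) \<alpha>"

text \<open>f : a \<rightarrow> b is fully faithful in A^[1]_c: for every object x of A^[1]_c the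
  functor f \<circ> - : Hom(x,a) \<rightarrow> Hom(x,b) is full and faithful.\<close>
definition fully_faithful_c :: "('o, 'm) cat_data \<Rightarrow> 'o \<times> 'o \<times> 'm \<Rightarrow> 'o \<times> 'o \<times> 'm \<Rightarrow>
    'm \<times> 'm \<Rightarrow> bool" where
  "fully_faithful_c C a b f \<longleftrightarrow>
     (\<forall>x. arr_obj_c C x \<longrightarrow>
       (\<forall>e e'. arr_mor C x a e \<longrightarrow> arr_mor C x a e' \<longrightarrow>
          (\<forall>\<beta>. two_arrow C x b (arr_comp C f e) (arr_comp C f e') \<beta> \<longrightarrow>
             (\<exists>\<alpha>. two_arrow C x a e e' \<alpha> \<and> whisker_left C f \<alpha> = \<beta>)) \<and>
          (\<forall>\<alpha> \<alpha>'. two_arrow C x a e e' \<alpha> \<longrightarrow> two_arrow C x a e e' \<alpha>' \<longrightarrow>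
             whisker_left C f \<alpha> = whisker_left C f \<alpha>' \<longrightarrow> \<alpha> = \<alpha>')))"

end

theory Submission
  imports Defs
begin


locale pa =
  fixes C :: "('o, 'm) cat_data"
  assumes pa: "preadditive C"
begin

lemma cat: "category C" using pa unfolding preadditive_def by blast

lemma hom_obj: "f \<in> hom C a b \<Longrightarrow> a \<in> obj C \<and> b \<in> obj C"
proof -
  assume "f \<in> hom C a b" then have "hom C a b \<noteq> {}" by blast
  then show ?thesis using cat unfolding category_def by meson
qed

lemma padd: "a \<in> obj C \<Longrightarrow> b \<in> obj C \<Longrightarrow>
        zer C a b \<in> hom C a b \<and>
        (\<forall>f\<in>hom C a b. \<forall>g\<in>hom C a b. plus C f g \<in> hom C a b) \<and>
        (\<forall>f\<in>hom C a b. neg C f \<in> hom C a b) \<and>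
        (\<forall>f\<in>hom C a b. \<forall>g\<in>hom C a b. \<forall>h\<in>hom C a b.
           plus C (plus C f g) h = plus C f (plus C g h)) \<and>
        (\<forall>f\<in>hom C a b. \<forall>g\<in>hom C a b. plus C f g = plus C g f) \<and>
        (\<forall>f\<in>hom C a b. plus C f (zer C a b) = f) \<and>
        (\<forall>f\<in>hom C a b. plus C f (neg C f) = zer C a b)"
  using pa unfolding preadditive_def by meson
lemma idm_hom: "a \<in> obj C \<Longrightarrow> idm C a \<in> hom C a a"
  using cat unfolding category_def by blast
lemma idl: "f \<in> hom C a b \<Longrightarrow> cmp C (idm C b) f = f"
  using cat unfolding category_def by blast
lemma idr: "f \<in> hom C a b \<Longrightarrow> cmp C f (idm C a) = f"
  using cat unfolding category_def by blast
lemma comp: "f \<in> hom C a b \<Longrightarrow> g \<in> hom C b c \<Longrightarrow> cmp C g f \<in> hom C a c"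
  using cat unfolding category_def by blast
lemma assoc: "f \<in> hom C a b \<Longrightarrow> g \<in> hom C b c \<Longrightarrow> h \<in> hom C c d \<Longrightarrow>
   cmp C h (cmp C g f) = cmp C (cmp C h g) f"
  using cat unfolding category_def by blast

lemma zer_hom: "a \<in> obj C \<Longrightarrow> b \<in> obj C \<Longrightarrow> zer C a b \<in> hom C a b"
  using pa unfolding preadditive_def by blast
lemma plus_hom: "f \<in> hom C a b \<Longrightarrow> g \<in> hom C a b \<Longrightarrow> plus C f g \<in> hom C a b"
  using padd hom_obj by meson
lemma neg_hom: "f \<in> hom C a b \<Longrightarrow> neg C f \<in> hom C a b"
  using padd hom_obj by meson
lemma add_assoc: "f \<in> hom C a b \<Longrightarrow> g \<in> hom C a b \<Longrightarrow> h \<in> hom C a b \<Longrightarrow>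
   plus C (plus C f g) h = plus C f (plus C g h)"
  using padd hom_obj by meson
lemma add_comm: "f \<in> hom C a b \<Longrightarrow> g \<in> hom C a b \<Longrightarrow> plus C f g = plus C g f"
  using padd hom_obj by meson
lemma add_zero: "f \<in> hom C a b \<Longrightarrow> plus C f (zer C a b) = f"
  using padd hom_obj by meson
lemma add_neg: "f \<in> hom C a b \<Longrightarrow> plus C f (neg C f) = zer C a b"
  using padd hom_obj by meson
lemma distl: "f \<in> hom C a b \<Longrightarrow> g \<in> hom C b c \<Longrightarrow> g' \<in> hom C b c \<Longrightarrow>
   cmp C (plus C g g') f = plus C (cmp C g f) (cmp C g' f)"
  using pa unfolding preadditive_def by blast
lemma distr: "f \<in> hom C a b \<Longrightarrow> f' \<in> hom C a b \<Longrightarrow> g \<in> hom C b c \<Longrightarrow>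
   cmp C g (plus C f f') = plus C (cmp C g f) (cmp C g f')"
  using pa unfolding preadditive_def by blast

lemma zer_hom': "f \<in> hom C a b \<Longrightarrow> zer C a b \<in> hom C a b"
  using zer_hom hom_obj by blast

lemma zero_add: "f \<in> hom C a b \<Longrightarrow> plus C (zer C a b) f = f"
  by (metis add_comm add_zero zer_hom')

lemma cancel: assumes "x \<in> hom C a b" "y \<in> hom C a b" "z \<in> hom C a b"
  "plus C x y = plus C x z" shows "y = z"
proof -
  have n: "neg C x \<in> hom C a b" using assms neg_hom by blast
  have "plus C (neg C x) (plus C x y) = plus C (neg C x) (plus C x z)" using assms by simp
  then have "plus C (plus C (neg C x) x) y = plus C (plus C (neg C x) x) z"
    using add_assoc[OF n assms(1)] assms by simp
  moreover have "plus C (neg C x) x = zer C a b" using add_comm[OF n assms(1)] add_neg[OF assms(1)] by simp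
  ultimately show ?thesis using zero_add assms by simp
qed

lemma neg_unique: "x \<in> hom C a b \<Longrightarrow> y \<in> hom C a b \<Longrightarrow> plus C x y = zer C a b \<Longrightarrow> y = neg C x"
  by (metis add_neg cancel neg_hom)

lemma neg_neg: "x \<in> hom C a b \<Longrightarrow> neg C (neg C x) = x"
  by (metis add_comm add_neg neg_hom neg_unique)

lemma minus_hom: "x \<in> hom C a b \<Longrightarrow> y \<in> hom C a b \<Longrightarrow> minus C x y \<in> hom C a b"
  unfolding minus_def by (simp add: neg_hom plus_hom)

lemma minus_self: "x \<in> hom C a b \<Longrightarrow> minus C x x = zer C a b"
  unfolding minus_def by (simp add: add_neg)

lemma neg_zer: "a \<in> obj C \<Longrightarrow> b \<in> obj C \<Longrightarrow> neg C (zer C a b) = zer C a b"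
  by (metis add_zero neg_unique zer_hom)

lemma minus_zero: "x \<in> hom C a b \<Longrightarrow> minus C x (zer C a b) = x"
  unfolding minus_def by (metis add_zero hom_obj neg_zer)

lemma minus_eq0: assumes "x \<in> hom C a b" "y \<in> hom C a b" "minus C x y = zer C a b" shows "x = y"
proof -
  have "neg C y = neg C x" using assms unfolding minus_def by (metis neg_hom neg_unique)
  then show ?thesis by (metis assms(1,2) neg_neg)
qed

lemma plus_minus: "x \<in> hom C a b \<Longrightarrow> y \<in> hom C a b \<Longrightarrow> plus C (minus C x y) y = x"
  unfolding minus_def by (metis add_assoc add_comm add_neg add_zero neg_hom)

lemma minus_plus: "x \<in> hom C a b \<Longrightarrow> y \<in> hom C a b \<Longrightarrow> minus C (plus C x y) y = x"
  unfolding minus_def by (metis add_assoc add_neg add_zero neg_hom)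

lemma comp_zer_r: assumes "g \<in> hom C b c" "a \<in> obj C" shows "cmp C g (zer C a b) = zer C a c"
proof -
  have z: "zer C a b \<in> hom C a b" using assms hom_obj zer_hom by blast
  have gz: "cmp C g (zer C a b) \<in> hom C a c" using comp z assms by blast
  have "cmp C g (zer C a b) = cmp C g (plus C (zer C a b) (zer C a b))" using add_zero z by simp
  also have "\<dots> = plus C (cmp C g (zer C a b)) (cmp C g (zer C a b))" using distr z assms by blast
  finally have "plus C (cmp C g (zer C a b)) (zer C a c) = plus C (cmp C g (zer C a b)) (cmp C g (zer C a b))"
    using add_zero gz by simp
  then show ?thesis using cancel gz zer_hom' by metis
qed

lemma comp_zer_l: assumes "f \<in> hom C a b" "c \<in> obj C" shows "cmp C (zer C b c) f = zer C a c"
proof -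
  have z: "zer C b c \<in> hom C b c" using assms hom_obj zer_hom by blast
  have gz: "cmp C (zer C b c) f \<in> hom C a c" using comp z assms by blast
  have "cmp C (zer C b c) f = cmp C (plus C (zer C b c) (zer C b c)) f" using add_zero z by simp
  also have "\<dots> = plus C (cmp C (zer C b c) f) (cmp C (zer C b c) f)" using distl z assms by blast
  finally have "plus C (cmp C (zer C b c) f) (zer C a c) = plus C (cmp C (zer C b c) f) (cmp C (zer C b c) f)"
    using add_zero gz by simp
  then show ?thesis using cancel gz zer_hom' by metis
qed

lemma comp_neg_r: assumes "f \<in> hom C a b" "g \<in> hom C b c" shows "cmp C g (neg C f) = neg C (cmp C g f)"
proof -
  have "plus C (cmp C g f) (cmp C g (neg C f)) = cmp C g (plus C f (neg C f))"
    using distr assms neg_hom by metis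
  also have "\<dots> = zer C a c" using add_neg assms comp_zer_r hom_obj by metis
  finally show ?thesis using neg_unique comp assms neg_hom by metis
qed

lemma comp_neg_l: assumes "f \<in> hom C a b" "g \<in> hom C b c" shows "cmp C (neg C g) f = neg C (cmp C g f)"
proof -
  have "plus C (cmp C g f) (cmp C (neg C g) f) = cmp C (plus C g (neg C g)) f"
    using distl assms neg_hom by metis
  also have "\<dots> = zer C a c" using add_neg assms comp_zer_l hom_obj by metis
  finally show ?thesis using neg_unique comp assms neg_hom by metis
qed

lemma comp_minus_r: "f \<in> hom C a b \<Longrightarrow> f' \<in> hom C a b \<Longrightarrow> g \<in> hom C b c \<Longrightarrow>
   cmp C g (minus C f f') = minus C (cmp C g f) (cmp C g f')"
  unfolding minus_def by (metis comp_neg_r distr neg_hom)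

lemma comp_minus_l: "f \<in> hom C a b \<Longrightarrow> g \<in> hom C b c \<Longrightarrow> g' \<in> hom C b c \<Longrightarrow>
   cmp C (minus C g g') f = minus C (cmp C g f) (cmp C g' f)"
  unfolding minus_def by (metis comp_neg_l distl neg_hom)

end


context pa begin

lemma monoD: "is_mono C A B f \<Longrightarrow> u \<in> hom C X A \<Longrightarrow> v \<in> hom C X A \<Longrightarrow> cmp C f u = cmp C f v \<Longrightarrow> u = v"
  unfolding is_mono_def using hom_obj by blast
lemma mono_hom: "is_mono C A B f \<Longrightarrow> f \<in> hom C A B"
  unfolding is_mono_def by blast
lemma epiD: "is_epi C A B f \<Longrightarrow> u \<in> hom C B X \<Longrightarrow> v \<in> hom C B X \<Longrightarrow> cmp C u f = cmp C v f \<Longrightarrow> u = v"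
  unfolding is_epi_def using hom_obj by blast
lemma epi_hom: "is_epi C A B f \<Longrightarrow> f \<in> hom C A B"
  unfolding is_epi_def by blast

lemma kerD: assumes "is_kernel C A B f K k"
  shows "f \<in> hom C A B" "k \<in> hom C K A" "cmp C f k = zer C K B"
  using assms unfolding is_kernel_def by auto
lemma kerU: assumes "is_kernel C A B f K k" "u \<in> hom C X A" "cmp C f u = zer C X B"
  shows "\<exists>!v. v \<in> hom C X K \<and> cmp C k v = u"
proof -
  have X: "X \<in> obj C" using hom_obj[OF assms(2)] by blast
  have "\<forall>X\<in>obj C. \<forall>u\<in>hom C X A. cmp C f u = zer C X B \<longrightarrow>
        (\<exists>!v. v \<in> hom C X K \<and> cmp C k v = u)" using assms(1) unfolding is_kernel_def by meson
  then show ?thesis using X assms(2,3) by blast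
qed
lemma cokD: assumes "is_cokernel C A B f Q q"
  shows "f \<in> hom C A B" "q \<in> hom C B Q" "cmp C q f = zer C A Q"
  using assms unfolding is_cokernel_def by auto
lemma cokU: assumes "is_cokernel C A B f Q q" "u \<in> hom C B X" "cmp C u f = zer C A X"
  shows "\<exists>!v. v \<in> hom C Q X \<and> cmp C v q = u"
proof -
  have X: "X \<in> obj C" using hom_obj[OF assms(2)] by blast
  have "\<forall>X\<in>obj C. \<forall>u\<in>hom C B X. cmp C u f = zer C A X \<longrightarrow>
        (\<exists>!v. v \<in> hom C Q X \<and> cmp C v q = u)" using assms(1) unfolding is_cokernel_def by meson
  then show ?thesis using X assms(2,3) by blast
qed

lemma kernel_lift: "is_kernel C A B f K k \<Longrightarrow> u \<in> hom C X A \<Longrightarrow> cmp C f u = zer C X B \<Longrightarrow>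
   \<exists>v \<in> hom C X K. cmp C k v = u"
  using kerU by blast
lemma cokernel_desc: "is_cokernel C A B f Q q \<Longrightarrow> u \<in> hom C B X \<Longrightarrow> cmp C u f = zer C A X \<Longrightarrow>
   \<exists>v \<in> hom C Q X. cmp C v q = u"
  using cokU by blast

lemma mono_zeroI: assumes "f \<in> hom C A B"
  "\<And>X u. X \<in> obj C \<Longrightarrow> u \<in> hom C X A \<Longrightarrow> cmp C f u = zer C X B \<Longrightarrow> u = zer C X A"
  shows "is_mono C A B f"
  unfolding is_mono_def
proof (intro conjI assms(1) ballI impI)
  fix X u v assume X: "X \<in> obj C" and u: "u \<in> hom C X A" and v: "v \<in> hom C X A"
    and e: "cmp C f u = cmp C f v"
  have "cmp C f (minus C u v) = zer C X B"
    using comp_minus_r[OF u v assms(1)] e minus_self comp[OF v assms(1)] by simp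
  then have "minus C u v = zer C X A" using assms(2) X minus_hom u v by blast
  then show "u = v" using minus_eq0 u v by blast
qed

lemma mono_zeroD: assumes "is_mono C A B f" "u \<in> hom C X A" "cmp C f u = zer C X B" shows "u = zer C X A"
proof -
  have f: "f \<in> hom C A B" using mono_hom[OF assms(1)] .
  have X: "X \<in> obj C" using hom_obj[OF assms(2)] by blast
  have z: "zer C X A \<in> hom C X A" using zer_hom' assms(2) by blast
  have "cmp C f (zer C X A) = zer C X B" using comp_zer_r[OF f X] .
  then show ?thesis using monoD[OF assms(1) assms(2) z] assms(3) by simp
qed

lemma epi_zeroI: assumes "f \<in> hom C A B"
  "\<And>X u. X \<in> obj C \<Longrightarrow> u \<in> hom C B X \<Longrightarrow> cmp C u f = zer C A X \<Longrightarrow> u = zer C B X"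
  shows "is_epi C A B f"
  unfolding is_epi_def
proof (intro conjI assms(1) ballI impI)
  fix X u v assume X: "X \<in> obj C" and u: "u \<in> hom C B X" and v: "v \<in> hom C B X"
    and e: "cmp C u f = cmp C v f"
  have "cmp C (minus C u v) f = zer C A X"
    using comp_minus_l[OF assms(1) u v] e minus_self comp[OF assms(1) v] by simp
  then have "minus C u v = zer C B X" using assms(2) X minus_hom u v by blast
  then show "u = v" using minus_eq0 u v by blast
qed

lemma epi_zeroD: assumes "is_epi C A B f" "u \<in> hom C B X" "cmp C u f = zer C A X" shows "u = zer C B X"
proof -
  have f: "f \<in> hom C A B" using epi_hom[OF assms(1)] .
  have X: "X \<in> obj C" using hom_obj[OF assms(2)] by blast
  have z: "zer C B X \<in> hom C B X" using zer_hom' assms(2) by blast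
  have "cmp C (zer C B X) f = zer C A X" using comp_zer_l[OF f X] .
  then show ?thesis using epiD[OF assms(1) assms(2) z] assms(3) by simp
qed

lemma kernel_mono: assumes "is_kernel C A B f K k" shows "is_mono C K A k"
proof (rule mono_zeroI)
  show k: "k \<in> hom C K A" using kerD[OF assms] by blast
  have f: "f \<in> hom C A B" using kerD[OF assms] by blast
  fix X u assume X: "X \<in> obj C" and u: "u \<in> hom C X K" and e: "cmp C k u = zer C X A"
  have z: "zer C X A \<in> hom C X A" using zer_hom' comp[OF u k] e by metis
  have "cmp C f (zer C X A) = zer C X B" using comp_zer_r[OF f X] .
  then have "\<exists>!v. v \<in> hom C X K \<and> cmp C k v = zer C X A" using kerU[OF assms z] by blast
  moreover have "zer C X K \<in> hom C X K" using zer_hom' u by blast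
  moreover have "cmp C k (zer C X K) = zer C X A" using comp_zer_r[OF k X] .
  ultimately show "u = zer C X K" using u e by blast
qed

lemma cokernel_epi: assumes "is_cokernel C A B f Q q" shows "is_epi C B Q q"
proof (rule epi_zeroI)
  show q: "q \<in> hom C B Q" using cokD[OF assms] by blast
  have f: "f \<in> hom C A B" using cokD[OF assms] by blast
  fix X u assume X: "X \<in> obj C" and u: "u \<in> hom C Q X" and e: "cmp C u q = zer C B X"
  have z: "zer C B X \<in> hom C B X" using zer_hom' comp[OF q u] e by metis
  have "cmp C (zer C B X) f = zer C A X" using comp_zer_l[OF f X] .
  then have "\<exists>!v. v \<in> hom C Q X \<and> cmp C v q = zer C B X" using cokU[OF assms z] by blast
  moreover have "zer C Q X \<in> hom C Q X" using zer_hom' u by blast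
  moreover have "cmp C (zer C Q X) q = zer C B X" using comp_zer_l[OF q X] .
  ultimately show "u = zer C Q X" using u e by blast
qed

lemma mono_comp: assumes "is_mono C A B m" "is_mono C B D n" shows "is_mono C A D (cmp C n m)"
proof -
  have m: "m \<in> hom C A B" and n: "n \<in> hom C B D" using mono_hom assms by auto
  show ?thesis
  proof (rule mono_zeroI)
    show "cmp C n m \<in> hom C A D" using comp m n by blast
    fix X u assume X: "X \<in> obj C" and u: "u \<in> hom C X A" and z: "cmp C (cmp C n m) u = zer C X D"
    have "cmp C n (cmp C m u) = zer C X D" using z assoc[OF u m n] by simp
    then have "cmp C m u = zer C X B" using mono_zeroD[OF assms(2)] comp u m by blast
    then show "u = zer C X A" using mono_zeroD[OF assms(1) u] by blast
  qed
qed

end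


locale ab = pa +
  assumes ab: "abelian C"
begin

lemma has_kernel: assumes "f \<in> hom C A B" shows "\<exists>K k. is_kernel C A B f K k"
proof -
  have "\<forall>A\<in>obj C. \<forall>B\<in>obj C. \<forall>f\<in>hom C A B.
        (\<exists>K k. is_kernel C A B f K k) \<and> (\<exists>Q q. is_cokernel C A B f Q q)"
    using ab unfolding abelian_def by meson
  then show ?thesis using assms hom_obj[OF assms] by blast
qed

lemma mono_kernel: "is_mono C A B f \<Longrightarrow> \<exists>Z g. is_kernel C B Z g A f"
  using ab unfolding abelian_def by meson

lemma image_lift:
  assumes cok: "is_cokernel C A B f Q q" and P: "projective C P"
    and s: "s \<in> hom C P B" and qs: "cmp C q s = zer C P Q"
  shows "\<exists>t \<in> hom C P A. cmp C f t = s"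
proof -
  have f: "f \<in> hom C A B" and q: "q \<in> hom C B Q" and qf: "cmp C q f = zer C A Q"
    using cokD[OF cok] by auto
  obtain I m where ker: "is_kernel C B Q q I m" using has_kernel[OF q] by blast
  have m: "m \<in> hom C I B" and qm: "cmp C q m = zer C I Q" using kerD[OF ker] by auto
  have mmono: "is_mono C I B m" using kernel_mono[OF ker] .
  obtain f' where f': "f' \<in> hom C A I" and mf: "cmp C m f' = f" using kernel_lift[OF ker f qf] by blast
  have epi: "is_epi C A I f'"
  proof (rule epi_zeroI[OF f'])
    fix Y u assume Y: "Y \<in> obj C" and u: "u \<in> hom C I Y" and uf: "cmp C u f' = zer C A Y"
    obtain N n where kn: "is_kernel C I Y u N n" using has_kernel[OF u] by blast
    have n: "n \<in> hom C N I" and un: "cmp C u n = zer C N Y" using kerD[OF kn] by auto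
    obtain e where e: "e \<in> hom C A N" and ne: "cmp C n e = f'" using kernel_lift[OF kn f' uf] by blast
    have mn_mono: "is_mono C N B (cmp C m n)" using mono_comp[OF kernel_mono[OF kn] mmono] .
    obtain Z g' where kg: "is_kernel C B Z g' N (cmp C m n)" using mono_kernel[OF mn_mono] by blast
    have g': "g' \<in> hom C B Z" and gmn: "cmp C g' (cmp C m n) = zer C N Z"
      using kerD[OF kg] by auto
    have "cmp C g' f = cmp C g' (cmp C (cmp C m n) e)" using mf ne assoc[OF e n m] by simp
    also have "\<dots> = cmp C (zer C N Z) e" using assoc[OF e comp[OF n m] g'] gmn by simp
    also have "\<dots> = zer C A Z" using comp_zer_l[OF e] hom_obj[OF g'] by blast
    finally obtain g'' where g'': "g'' \<in> hom C Q Z" and gq: "cmp C g'' q = g'"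
      using cokernel_desc[OF cok g'] by blast
    have "cmp C g' m = cmp C g'' (cmp C q m)" using gq assoc[OF m q g''] by simp
    also have "\<dots> = zer C I Z" using qm comp_zer_r[OF g''] hom_obj[OF m] by simp
    finally obtain r where r: "r \<in> hom C I N" and mnr: "cmp C (cmp C m n) r = m"
      using kernel_lift[OF kg m] by blast
    have "cmp C m (cmp C n r) = cmp C m (idm C I)" using mnr assoc[OF r n m] idr[OF m] by simp
    moreover have "cmp C n r \<in> hom C I I" using comp[OF r n] .
    moreover have "idm C I \<in> hom C I I" using idm_hom hom_obj[OF m] by blast
    ultimately have nr: "cmp C n r = idm C I"
      using monoD[OF mmono] by blast
    have "u = cmp C u (cmp C n r)" using nr idr[OF u] by simp
    also have "\<dots> = cmp C (zer C N Y) r" using assoc[OF r n u] un by simp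
    also have "\<dots> = zer C I Y" using comp_zer_l[OF r] Y by blast
    finally show "u = zer C I Y" .
  qed
  obtain s' where s': "s' \<in> hom C P I" and ms: "cmp C m s' = s" using kernel_lift[OF ker s qs] by blast
  have "\<exists>v\<in>hom C P A. cmp C f' v = s'"
    using P epi s' unfolding projective_def by blast
  then obtain t where t: "t \<in> hom C P A" and ft: "cmp C f' t = s'" by blast
  have "cmp C f t = s" using mf ft ms assoc[OF t f' m] by simp
  then show ?thesis using t by blast
qed

end


context ab begin

lemma mono_epi_iso: assumes mo: "is_mono C A B f" and ep: "is_epi C A B f" shows "is_iso C A B f"
proof -
  have f: "f \<in> hom C A B" using mono_hom[OF mo] .
  obtain Z z where cz: "is_cokernel C Z A z B f" using ab ep unfolding abelian_def by meson
  have z: "z \<in> hom C Z A" and fz: "cmp C f z = zer C Z B" using cokD[OF cz] by auto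
  have z0: "z = zer C Z A" using mono_zeroD[OF mo z fz] .
  have A: "A \<in> obj C" using hom_obj[OF f] by blast
  have i: "idm C A \<in> hom C A A" using idm_hom[OF A] .
  have "cmp C (idm C A) z = zer C Z A" using idl[OF z] z0 by simp
  then obtain v where v: "v \<in> hom C B A" and vf: "cmp C v f = idm C A"
    using cokernel_desc[OF cz i] by blast
  have fv: "cmp C f v \<in> hom C B B" using comp[OF v f] .
  have B: "idm C B \<in> hom C B B" using idm_hom hom_obj[OF f] by blast
  have "cmp C (cmp C f v) f = cmp C (idm C B) f" using assoc[OF f v f] vf idr[OF f] idl[OF f] by simp
  then have "cmp C f v = idm C B" using epiD[OF ep fv B] by blast
  then show ?thesis unfolding is_iso_def using f v vf by blast
qed

lemma iso_mono: assumes "is_iso C A B f" shows "is_mono C A B f"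
proof -
  obtain gi where f: "f \<in> hom C A B" and gi: "gi \<in> hom C B A" and l: "cmp C gi f = idm C A"
    using assms unfolding is_iso_def by blast
  show ?thesis
  proof (rule mono_zeroI[OF f])
    fix X u assume X: "X \<in> obj C" and u: "u \<in> hom C X A" and z: "cmp C f u = zer C X B"
    have "u = cmp C (cmp C gi f) u" using l idl[OF u] by simp
    also have "\<dots> = cmp C gi (zer C X B)" using assoc[OF u f gi] z by simp
    also have "\<dots> = zer C X A" using comp_zer_r[OF gi X] .
    finally show "u = zer C X A" .
  qed
qed

lemma two0: assumes P: "P \<in> obj C" and a: "a \<in> hom C A1 A0"
  shows "two_arrow C (P, P, zer C P P) (A1, A0, a) (s, zer C P A1) (s', zer C P A1) \<delta> \<longleftrightarrow>
         \<delta> \<in> hom C P A1 \<and> minus C s s' = cmp C a \<delta>"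
proof -
  have z: "zer C P A1 \<in> hom C P A1" using zer_hom P hom_obj[OF a] by blast
  have "\<delta> \<in> hom C P A1 \<Longrightarrow> cmp C \<delta> (zer C P P) = zer C P A1" using comp_zer_r P by blast
  then show ?thesis unfolding two_arrow_def using minus_self[OF z] by auto
qed

lemma arr0: assumes P: "P \<in> obj C" and a: "a \<in> hom C A1 A0" and s: "s \<in> hom C P A0"
  shows "arr_mor C (P, P, zer C P P) (A1, A0, a) (s, zer C P A1)"
  unfolding arr_mor_def using zer_hom P hom_obj[OF a] comp_zer_r[OF a P] comp_zer_r[OF s P] s by auto

end


context ab begin

lemma main:
  assumes ep: "enough_projectives C"
    and oa: "arr_obj_c C (A1, A0, a)" and ob: "arr_obj_c C (B1, B0, b)"
    and mf: "arr_mor C (A1, A0, a) (B1, B0, b) (f0, f1)"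
    and kk: "is_kernel C A1 A0 a K k" and kk': "is_kernel C B1 B0 b K' k'"
    and g: "g \<in> hom C K K'" and kg: "cmp C k' g = cmp C f1 k"
    and cq: "is_cokernel C A1 A0 a Q q" and cq': "is_cokernel C B1 B0 b Q' q'"
    and h: "h \<in> hom C Q Q'" and hq: "cmp C h q = cmp C q' f0"
  shows "fully_faithful_c C (A1, A0, a) (B1, B0, b) (f0, f1) \<longleftrightarrow>
           is_iso C K K' g \<and> is_mono C Q Q' h"
proof -
  have a: "a \<in> hom C A1 A0" using oa unfolding arr_obj_c_def arr_obj_def by simp
  have b: "b \<in> hom C B1 B0" using ob unfolding arr_obj_c_def arr_obj_def by simp
  have f0: "f0 \<in> hom C A0 B0" and f1: "f1 \<in> hom C A1 B1" and bf: "cmp C b f1 = cmp C f0 a"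
    using mf unfolding arr_mor_def by auto
  have k: "k \<in> hom C K A1" and ak: "cmp C a k = zer C K A0" using kerD[OF kk] by auto
  have k': "k' \<in> hom C K' B1" and bk': "cmp C b k' = zer C K' B0" using kerD[OF kk'] by auto
  have q: "q \<in> hom C A0 Q" and qa: "cmp C q a = zer C A1 Q" using cokD[OF cq] by auto
  have q': "q' \<in> hom C B0 Q'" and qb: "cmp C q' b = zer C B1 Q'" using cokD[OF cq'] by auto
  have kmono: "is_mono C K A1 k" using kernel_mono[OF kk] .
  have k'mono: "is_mono C K' B1 k'" using kernel_mono[OF kk'] .
  have qepi: "is_epi C A0 Q q" using cokernel_epi[OF cq] .
  have enough: "\<And>X. X \<in> obj C \<Longrightarrow> \<exists>P p. projective C P \<and> is_epi C P X p"
    using ep unfolding enough_projectives_def by blast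
  have Pobj: "\<And>P. projective C P \<Longrightarrow> P \<in> obj C" unfolding projective_def by blast
  have A0: "A0 \<in> obj C" and A1: "A1 \<in> obj C" using hom_obj[OF a] by auto
  have B0: "B0 \<in> obj C" and B1: "B1 \<in> obj C" using hom_obj[OF b] by auto
  show ?thesis
  proof
    assume FF: "fully_faithful_c C (A1, A0, a) (B1, B0, b) (f0, f1)"
    have FullP: "\<exists>\<alpha>\<in>hom C P A1. s = cmp C a \<alpha> \<and> cmp C f1 \<alpha> = \<beta>"
      if P: "projective C P" and s: "s \<in> hom C P A0" and \<beta>: "\<beta> \<in> hom C P B1"
        and e: "cmp C f0 s = cmp C b \<beta>" for P s \<beta>
    proof -
      have Po: "P \<in> obj C" using Pobj[OF P] .
      have x: "arr_obj_c C (P, P, zer C P P)"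
        unfolding arr_obj_c_def arr_obj_def using P zer_hom Po by auto
      have z0: "zer C P A0 \<in> hom C P A0" using zer_hom Po A0 by blast
      have m1: "arr_mor C (P, P, zer C P P) (A1, A0, a) (s, zer C P A1)" using arr0[OF Po a s] .
      have m2: "arr_mor C (P, P, zer C P P) (A1, A0, a) (zer C P A0, zer C P A1)" using arr0[OF Po a z0] .
      have c1: "arr_comp C (f0, f1) (s, zer C P A1) = (cmp C f0 s, zer C P B1)"
        unfolding arr_comp_def using comp_zer_r[OF f1 Po] by simp
      have c2: "arr_comp C (f0, f1) (zer C P A0, zer C P A1) = (zer C P B0, zer C P B1)"
        unfolding arr_comp_def using comp_zer_r[OF f1 Po] comp_zer_r[OF f0 Po] by simp
      have fs: "cmp C f0 s \<in> hom C P B0" using comp[OF s f0] .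
      have "two_arrow C (P, P, zer C P P) (B1, B0, b) (cmp C f0 s, zer C P B1) (zer C P B0, zer C P B1) \<beta>"
        using two0[OF Po b] \<beta> e minus_zero[OF fs] by simp
      then obtain \<alpha> where t: "two_arrow C (P, P, zer C P P) (A1, A0, a) (s, zer C P A1) (zer C P A0, zer C P A1) \<alpha>"
          and w: "whisker_left C (f0, f1) \<alpha> = \<beta>"
        using FF x m1 m2 c1 c2 unfolding fully_faithful_c_def by metis
      have "\<alpha> \<in> hom C P A1" "s = cmp C a \<alpha>" using t two0[OF Po a] minus_zero[OF s] by auto
      moreover have "cmp C f1 \<alpha> = \<beta>" using w unfolding whisker_left_def by simp
      ultimately show ?thesis by blast
    qed
    have FaithP: "\<delta> = zer C P A1"
      if P: "projective C P" and \<delta>: "\<delta> \<in> hom C P A1" and ad: "cmp C a \<delta> = zer C P A0"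
        and fd: "cmp C f1 \<delta> = zer C P B1" for P \<delta>
    proof -
      have Po: "P \<in> obj C" using Pobj[OF P] .
      have x: "arr_obj_c C (P, P, zer C P P)"
        unfolding arr_obj_c_def arr_obj_def using P zer_hom Po by auto
      have z0: "zer C P A0 \<in> hom C P A0" using zer_hom Po A0 by blast
      have z1: "zer C P A1 \<in> hom C P A1" using zer_hom Po A1 by blast
      have m2: "arr_mor C (P, P, zer C P P) (A1, A0, a) (zer C P A0, zer C P A1)" using arr0[OF Po a z0] .
      have t1: "two_arrow C (P, P, zer C P P) (A1, A0, a) (zer C P A0, zer C P A1) (zer C P A0, zer C P A1) \<delta>"
        using two0[OF Po a] \<delta> ad minus_self[OF z0] by simp
      have t2: "two_arrow C (P, P, zer C P P) (A1, A0, a) (zer C P A0, zer C P A1) (zer C P A0, zer C P A1) (zer C P A1)"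
        using two0[OF Po a] z1 minus_self[OF z0] comp_zer_r[OF a Po] by simp
      have "whisker_left C (f0, f1) \<delta> = whisker_left C (f0, f1) (zer C P A1)"
        unfolding whisker_left_def using fd comp_zer_r[OF f1 Po] by simp
      then show ?thesis using FF x m2 t1 t2 unfolding fully_faithful_c_def by metis
    qed
    have gmono: "is_mono C K K' g"
    proof (rule mono_zeroI[OF g])
      fix X u assume X: "X \<in> obj C" and u: "u \<in> hom C X K" and gu: "cmp C g u = zer C X K'"
      obtain P p where P: "projective C P" and p: "is_epi C P X p" using enough[OF X] by blast
      have p': "p \<in> hom C P X" using epi_hom[OF p] .
      have Po: "P \<in> obj C" using Pobj[OF P] .
      have up: "cmp C u p \<in> hom C P K" using comp[OF p' u] .
      have d: "cmp C k (cmp C u p) \<in> hom C P A1" using comp[OF up k] .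
      have "cmp C a (cmp C k (cmp C u p)) = zer C P A0"
        using assoc[OF up k a] ak comp_zer_l[OF up A0] by simp
      moreover have "cmp C f1 (cmp C k (cmp C u p)) = zer C P B1"
      proof -
        have "cmp C f1 (cmp C k (cmp C u p)) = cmp C (cmp C k' g) (cmp C u p)"
          using assoc[OF up k f1] kg by simp
        also have "\<dots> = cmp C k' (cmp C (cmp C g u) p)" using assoc[OF up g k'] assoc[OF p' u g] by simp
        also have "\<dots> = zer C P B1" using gu comp_zer_l[OF p'] comp_zer_r[OF k' Po] hom_obj[OF g] by simp
        finally show ?thesis .
      qed
      ultimately have "cmp C k (cmp C u p) = zer C P A1" using FaithP[OF P d] by blast
      then have "cmp C u p = zer C P K" using mono_zeroD[OF kmono up] by blast
      then show "u = zer C X K" using epi_zeroD[OF p u] by blast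
    qed
    have gepi: "is_epi C K K' g"
    proof (rule epi_zeroI[OF g])
      fix Y u assume Y: "Y \<in> obj C" and u: "u \<in> hom C K' Y" and ug: "cmp C u g = zer C K Y"
      have K': "K' \<in> obj C" using hom_obj[OF g] by blast
      obtain P p where P: "projective C P" and p: "is_epi C P K' p" using enough[OF K'] by blast
      have p': "p \<in> hom C P K'" using epi_hom[OF p] .
      have Po: "P \<in> obj C" using Pobj[OF P] .
      have z0: "zer C P A0 \<in> hom C P A0" using zer_hom Po A0 by blast
      have kp: "cmp C k' p \<in> hom C P B1" using comp[OF p' k'] .
      have "cmp C f0 (zer C P A0) = cmp C b (cmp C k' p)"
        using comp_zer_r[OF f0 Po] assoc[OF p' k' b] bk' comp_zer_l[OF p' B0] by simp
      then obtain \<alpha> where \<alpha>: "\<alpha> \<in> hom C P A1" and a0: "zer C P A0 = cmp C a \<alpha>"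
          and fa: "cmp C f1 \<alpha> = cmp C k' p"
        using FullP[OF P z0 kp] by blast
      obtain w where w: "w \<in> hom C P K" and kw: "cmp C k w = \<alpha>"
        using kernel_lift[OF kk \<alpha>] a0 by metis
      have "cmp C k' (cmp C g w) = cmp C k' p" using assoc[OF w g k'] kg assoc[OF w k f1] kw fa by simp
      then have gw: "cmp C g w = p" using monoD[OF k'mono comp[OF w g] p'] by blast
      have "cmp C u p = zer C P Y" using gw[symmetric] assoc[OF w g u] ug comp_zer_l[OF w Y] by simp
      then show "u = zer C K' Y" using epi_zeroD[OF p u] by blast
    qed
    have hmono: "is_mono C Q Q' h"
    proof (rule mono_zeroI[OF h])
      fix X u assume X: "X \<in> obj C" and u: "u \<in> hom C X Q" and hu: "cmp C h u = zer C X Q'"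
      obtain P p where P: "projective C P" and p: "is_epi C P X p" using enough[OF X] by blast
      have p': "p \<in> hom C P X" using epi_hom[OF p] .
      have Po: "P \<in> obj C" using Pobj[OF P] .
      have up: "cmp C u p \<in> hom C P Q" using comp[OF p' u] .
      obtain s where s: "s \<in> hom C P A0" and qs: "cmp C q s = cmp C u p"
        using P qepi up unfolding projective_def by blast
      have fs: "cmp C f0 s \<in> hom C P B0" using comp[OF s f0] .
      have "cmp C q' (cmp C f0 s) = cmp C h (cmp C u p)"
        using assoc[OF s f0 q'] hq[symmetric] assoc[OF s q h] qs by simp
      also have "\<dots> = zer C P Q'" using assoc[OF p' u h] hu comp_zer_l[OF p'] hom_obj[OF h] by simp
      finally obtain \<beta> where \<beta>: "\<beta> \<in> hom C P B1" and b\<beta>: "cmp C b \<beta> = cmp C f0 s"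
        using image_lift[OF cq' P fs] by blast
      obtain \<alpha> where \<alpha>: "\<alpha> \<in> hom C P A1" and sa: "s = cmp C a \<alpha>"
        using FullP[OF P s \<beta>] b\<beta> by metis
      have "cmp C u p = zer C P Q" using qs[symmetric] sa assoc[OF \<alpha> a q] qa comp_zer_l[OF \<alpha>] hom_obj[OF q] by simp
      then show "u = zer C X Q" using epi_zeroD[OF p u] by blast
    qed
    show "is_iso C K K' g \<and> is_mono C Q Q' h" using mono_epi_iso[OF gmono gepi] hmono by blast
  next
    assume "is_iso C K K' g \<and> is_mono C Q Q' h"
    then have giso: "is_iso C K K' g" and hmono: "is_mono C Q Q' h" by auto
    have gmono: "is_mono C K K' g" using iso_mono[OF giso] .
    obtain gi where gi: "gi \<in> hom C K' K" and ggi: "cmp C g gi = idm C K'"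
      using giso unfolding is_iso_def by blast
    have kz: "\<delta> = zer C X A1"
      if \<delta>: "\<delta> \<in> hom C X A1" and ad: "cmp C a \<delta> = zer C X A0" and fd: "cmp C f1 \<delta> = zer C X B1" for X \<delta>
    proof -
      have X: "X \<in> obj C" using hom_obj[OF \<delta>] by blast
      obtain z where z: "z \<in> hom C X K" and kz: "cmp C k z = \<delta>" using kernel_lift[OF kk \<delta> ad] by blast
      have "cmp C k' (cmp C g z) = zer C X B1" using assoc[OF z g k'] kg assoc[OF z k f1] kz fd by simp
      then have "cmp C g z = zer C X K'" using mono_zeroD[OF k'mono comp[OF z g]] by blast
      then have "z = zer C X K" using mono_zeroD[OF gmono z] by blast
      then show ?thesis using kz comp_zer_r[OF k X] by simp
    qed
    show "fully_faithful_c C (A1, A0, a) (B1, B0, b) (f0, f1)"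
      unfolding fully_faithful_c_def
    proof (intro allI impI)
      fix x e e'
      assume ox: "arr_obj_c C x" and me: "arr_mor C x (A1, A0, a) e" and me': "arr_mor C x (A1, A0, a) e'"
      obtain X1 X0 xm where xd: "x = (X1, X0, xm)" by (cases x) auto
      obtain e0 e1 where ed: "e = (e0, e1)" by (cases e) auto
      obtain e0' e1' where ed': "e' = (e0', e1')" by (cases e') auto
      have xm: "xm \<in> hom C X1 X0" and X0p: "projective C X0"
        using ox unfolding xd arr_obj_c_def arr_obj_def by auto
      have e0: "e0 \<in> hom C X0 A0" and e1: "e1 \<in> hom C X1 A1" and ae: "cmp C a e1 = cmp C e0 xm"
        using me unfolding xd ed arr_mor_def by auto
      have e0': "e0' \<in> hom C X0 A0" and e1': "e1' \<in> hom C X1 A1" and ae': "cmp C a e1' = cmp C e0' xm"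
        using me' unfolding xd ed' arr_mor_def by auto
      have X0: "X0 \<in> obj C" and X1: "X1 \<in> obj C" using hom_obj[OF xm] by auto
      define d0 where "d0 = minus C e0 e0'"
      define d1 where "d1 = minus C e1 e1'"
      have d0: "d0 \<in> hom C X0 A0" unfolding d0_def using minus_hom e0 e0' by blast
      have d1: "d1 \<in> hom C X1 A1" unfolding d1_def using minus_hom e1 e1' by blast
      have ad1: "cmp C a d1 = cmp C d0 xm"
        unfolding d0_def d1_def using comp_minus_r[OF e1 e1' a] comp_minus_l[OF xm e0 e0'] ae ae' by simp
      have F1: "\<forall>\<beta>. two_arrow C x (B1, B0, b) (arr_comp C (f0, f1) e) (arr_comp C (f0, f1) e') \<beta> \<longrightarrow>
             (\<exists>\<alpha>. two_arrow C x (A1, A0, a) e e' \<alpha> \<and> whisker_left C (f0, f1) \<alpha> = \<beta>)"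
      proof (intro allI impI)
        fix \<beta> assume t: "two_arrow C x (B1, B0, b) (arr_comp C (f0, f1) e) (arr_comp C (f0, f1) e') \<beta>"
        have \<beta>: "\<beta> \<in> hom C X0 B1" and t1: "minus C (cmp C f1 e1) (cmp C f1 e1') = cmp C \<beta> xm"
          and t0: "minus C (cmp C f0 e0) (cmp C f0 e0') = cmp C b \<beta>"
          using t unfolding xd ed ed' two_arrow_def arr_comp_def by auto
        have fd0: "cmp C f0 d0 = cmp C b \<beta>" unfolding d0_def using comp_minus_r[OF e0 e0' f0] t0 by simp
        have fd1: "cmp C f1 d1 = cmp C \<beta> xm" unfolding d1_def using comp_minus_r[OF e1 e1' f1] t1 by simp
        have "cmp C h (cmp C q d0) = cmp C q' (cmp C b \<beta>)"
          using assoc[OF d0 q h] hq assoc[OF d0 f0 q'] fd0 by simp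
        also have "\<dots> = zer C X0 Q'" using assoc[OF \<beta> b q'] qb comp_zer_l[OF \<beta>] hom_obj[OF q'] by simp
        finally have "cmp C q d0 = zer C X0 Q" using mono_zeroD[OF hmono comp[OF d0 q]] by blast
        then obtain \<alpha>0 where \<alpha>0: "\<alpha>0 \<in> hom C X1 A1 \<or> \<alpha>0 \<in> hom C X0 A1" and a\<alpha>0: "cmp C a \<alpha>0 = d0"
          and \<alpha>0': "\<alpha>0 \<in> hom C X0 A1"
          using image_lift[OF cq X0p d0] by blast
        define \<gamma> where "\<gamma> = minus C \<beta> (cmp C f1 \<alpha>0)"
        have f\<alpha>0: "cmp C f1 \<alpha>0 \<in> hom C X0 B1" using comp[OF \<alpha>0' f1] .
        have \<gamma>: "\<gamma> \<in> hom C X0 B1" unfolding \<gamma>_def using minus_hom \<beta> f\<alpha>0 by blast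
        have "cmp C b \<gamma> = minus C (cmp C b \<beta>) (cmp C b (cmp C f1 \<alpha>0))"
          unfolding \<gamma>_def using comp_minus_r[OF \<beta> f\<alpha>0 b] .
        also have "cmp C b (cmp C f1 \<alpha>0) = cmp C b \<beta>"
          using assoc[OF \<alpha>0' f1 b] bf assoc[OF \<alpha>0' a f0] a\<alpha>0 fd0 by simp
        finally have "cmp C b \<gamma> = zer C X0 B0" using minus_self comp[OF \<beta> b] by simp
        then obtain w where w: "w \<in> hom C X0 K'" and kw: "cmp C k' w = \<gamma>"
          using kernel_lift[OF kk' \<gamma>] by blast
        define w' where "w' = cmp C gi w"
        have w': "w' \<in> hom C X0 K" unfolding w'_def using comp[OF w gi] .
        have kw': "cmp C k w' \<in> hom C X0 A1" using comp[OF w' k] .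
        define \<alpha>1 where "\<alpha>1 = plus C \<alpha>0 (cmp C k w')"
        have \<alpha>1: "\<alpha>1 \<in> hom C X0 A1" unfolding \<alpha>1_def using plus_hom \<alpha>0' kw' by blast
        have fkw: "cmp C f1 (cmp C k w') = \<gamma>"
        proof -
          have "cmp C f1 (cmp C k w') = cmp C (cmp C k' g) w'" using assoc[OF w' k f1] kg by simp
          also have "\<dots> = cmp C k' (cmp C (cmp C g gi) w)"
            unfolding w'_def using assoc[OF w' g k'] assoc[OF w gi g] unfolding w'_def by simp
          also have "\<dots> = \<gamma>" using ggi idl[OF w] kw by simp
          finally show ?thesis .
        qed
        have f\<alpha>1: "cmp C f1 \<alpha>1 = \<beta>"
        proof -
          have "cmp C f1 \<alpha>1 = plus C (cmp C f1 \<alpha>0) \<gamma>"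
            unfolding \<alpha>1_def using distr[OF \<alpha>0' kw' f1] fkw by simp
          also have "\<dots> = plus C \<gamma> (cmp C f1 \<alpha>0)" using add_comm f\<alpha>0 \<gamma> by blast
          also have "\<dots> = \<beta>" unfolding \<gamma>_def using plus_minus[OF \<beta> f\<alpha>0] .
          finally show ?thesis .
        qed
        have a\<alpha>1: "cmp C a \<alpha>1 = d0"
        proof -
          have "cmp C a (cmp C k w') = zer C X0 A0" using assoc[OF w' k a] ak comp_zer_l[OF w' A0] by simp
          then show ?thesis unfolding \<alpha>1_def using distr[OF \<alpha>0' kw' a] a\<alpha>0 add_zero[OF d0] by simp
        qed
        have \<alpha>x: "\<alpha>1 \<in> hom C X0 A1" using \<alpha>1 .
        have ax: "cmp C \<alpha>1 xm \<in> hom C X1 A1" using comp[OF xm \<alpha>1] .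
        define \<epsilon> where "\<epsilon> = minus C d1 (cmp C \<alpha>1 xm)"
        have \<epsilon>: "\<epsilon> \<in> hom C X1 A1" unfolding \<epsilon>_def using minus_hom d1 ax by blast
        have "cmp C a \<epsilon> = minus C (cmp C d0 xm) (cmp C d0 xm)"
          unfolding \<epsilon>_def using comp_minus_r[OF d1 ax a] ad1 assoc[OF xm \<alpha>1 a] a\<alpha>1 by simp
        then have ae: "cmp C a \<epsilon> = zer C X1 A0" using minus_self comp[OF xm d0] by simp
        have "cmp C f1 \<epsilon> = minus C (cmp C \<beta> xm) (cmp C \<beta> xm)"
          unfolding \<epsilon>_def using comp_minus_r[OF d1 ax f1] fd1 assoc[OF xm \<alpha>1 f1] f\<alpha>1 by simp
        then have fe: "cmp C f1 \<epsilon> = zer C X1 B1" using minus_self comp[OF xm \<beta>] by simp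
        have "\<epsilon> = zer C X1 A1" using kz[OF \<epsilon> ae fe] .
        then have d1e: "d1 = cmp C \<alpha>1 xm" using minus_eq0[OF d1 ax] unfolding \<epsilon>_def by blast
        have "two_arrow C x (A1, A0, a) e e' \<alpha>1"
          unfolding xd ed ed' two_arrow_def using \<alpha>1 d1e a\<alpha>1 d0_def d1_def by simp
        moreover have "whisker_left C (f0, f1) \<alpha>1 = \<beta>" unfolding whisker_left_def using f\<alpha>1 by simp
        ultimately show "\<exists>\<alpha>. two_arrow C x (A1, A0, a) e e' \<alpha> \<and> whisker_left C (f0, f1) \<alpha> = \<beta>" by blast
      qed
      have F2: "\<forall>\<alpha> \<alpha>'. two_arrow C x (A1, A0, a) e e' \<alpha> \<longrightarrow> two_arrow C x (A1, A0, a) e e' \<alpha>' \<longrightarrow>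
             whisker_left C (f0, f1) \<alpha> = whisker_left C (f0, f1) \<alpha>' \<longrightarrow> \<alpha> = \<alpha>'"
      proof (intro allI impI)
        fix \<alpha> \<alpha>'
        assume t: "two_arrow C x (A1, A0, a) e e' \<alpha>" and t': "two_arrow C x (A1, A0, a) e e' \<alpha>'"
          and w: "whisker_left C (f0, f1) \<alpha> = whisker_left C (f0, f1) \<alpha>'"
        have \<alpha>: "\<alpha> \<in> hom C X0 A1" and a\<alpha>: "d0 = cmp C a \<alpha>"
          using t unfolding xd ed ed' two_arrow_def d0_def by auto
        have \<alpha>': "\<alpha>' \<in> hom C X0 A1" and a\<alpha>': "d0 = cmp C a \<alpha>'"
          using t' unfolding xd ed ed' two_arrow_def d0_def by auto
        have fw: "cmp C f1 \<alpha> = cmp C f1 \<alpha>'" using w unfolding whisker_left_def by simp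
        have dm: "minus C \<alpha> \<alpha>' \<in> hom C X0 A1" using minus_hom \<alpha> \<alpha>' by blast
        have "cmp C a (minus C \<alpha> \<alpha>') = zer C X0 A0"
          using comp_minus_r[OF \<alpha> \<alpha>' a] a\<alpha> a\<alpha>' minus_self[OF d0] by simp
        moreover have "cmp C f1 (minus C \<alpha> \<alpha>') = zer C X0 B1"
          using comp_minus_r[OF \<alpha> \<alpha>' f1] fw minus_self comp[OF \<alpha>' f1] by simp
        ultimately have "minus C \<alpha> \<alpha>' = zer C X0 A1" using kz[OF dm] by blast
        then show "\<alpha> = \<alpha>'" using minus_eq0[OF \<alpha> \<alpha>'] by blast
      qed
      show "(\<forall>\<beta>. two_arrow C x (B1, B0, b) (arr_comp C (f0, f1) e) (arr_comp C (f0, f1) e') \<beta> \<longrightarrow>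
             (\<exists>\<alpha>. two_arrow C x (A1, A0, a) e e' \<alpha> \<and> whisker_left C (f0, f1) \<alpha> = \<beta>)) \<and>
           (\<forall>\<alpha> \<alpha>'. two_arrow C x (A1, A0, a) e e' \<alpha> \<longrightarrow> two_arrow C x (A1, A0, a) e e' \<alpha>' \<longrightarrow>
             whisker_left C (f0, f1) \<alpha> = whisker_left C (f0, f1) \<alpha>' \<longrightarrow> \<alpha> = \<alpha>')" using F1 F2 by (rule conjI)
    qed
  qed
qed

end

theorem lemma3p2:
  fixes C :: "('o, 'm) cat_data"
  assumes "abelian C" and "enough_projectives C"
    and "arr_obj_c C (A1, A0, a)" and "arr_obj_c C (B1, B0, b)"
    and "arr_mor C (A1, A0, a) (B1, B0, b) (f0, f1)"
    and "is_kernel C A1 A0 a K k" and "is_kernel C B1 B0 b K' k'"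
    and "g \<in> hom C K K'" and "cmp C k' g = cmp C f1 k"
    and "is_cokernel C A1 A0 a Q q" and "is_cokernel C B1 B0 b Q' q'"
    and "h \<in> hom C Q Q'" and "cmp C h q = cmp C q' f0"
  shows "fully_faithful_c C (A1, A0, a) (B1, B0, b) (f0, f1) \<longleftrightarrow>
           is_iso C K K' g \<and> is_mono C Q Q' h"
proof -
  have "ab C" unfolding ab_def pa_def ab_axioms_def using assms(1) unfolding abelian_def by blast
  then interpret ab C .
  show ?thesis by (rule main[OF assms(2-13)])
qed

end
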